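(* Let $T$ be a basic maximal rigid object of $\mathcal{C}_n$ with top summand $T_1=(1,n-1)$, let $*$ be either $\mathcal{T}$ or $\mathcal{D}$, and let $X\in\mathcal{F}$. (i) $R(X)\cap\operatorname{add}T$ is empty if and only if $X\in\operatorname{add}\tau T$. (ii) For any $T$-subwing triple $(T_i;T_j,T_k)$, at most one of $T_j$ and $T_k$ lies in $R^*(X)$. (iii) If $R^*(X)\cap\operatorname{add}T$ is non-empty, there is a unique string in the quiver of $\Lambda_T$ which traverses each of the vertices corresponding to the indecomposables in $R^*(X)\cap\operatorname{add}T$ exactly once, traverses no other vertex, and ends in the vertex corresponding to the summand in $R^*(X)\cap\operatorname{add}T$ of highest quasilength. (iv) A string as in (iii) contains no $\mathcal{D}$-arrow and no inverse of a $\mathcal{D}$-arrow.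
   Context: Let $k$ be algebraically closed, $n\ge2$, $\mathcal{T}_n$ the tube of rank $n$ (finite-dimensional nilpotent representations of the cyclically oriented $\tilde A_{n-1}$-quiver; AR-translation $\tau$), $\mathcal{C}_n=D^b(\mathcal{T}_n)/\tau^{-1}[1]$ the cluster tube, with indecomposables identified with those of $\mathcal{T}_n$. Indecomposables have coordinates $(a,b)$, $a\in\mathbb{Z}/n$ (represented in $\{1,\dots,n\}$), $b\ge1$ the quasilength, with $\tau(a,b)=(a-1,b)$ and irreducible maps $(a,b)\to(a,b+1)$, $(a,b)\to(a+1,b-1)$. For indecomposables $X,Y$, $\operatorname{Hom}_{\mathcal{C}_n}(X,Y)=\operatorname{Hom}_{\mathcal{T}_n}(X,Y)\oplus\operatorname{Hom}_{D^b}(X,\tau^{-1}Y[1])$; elements of the first summand are $\mathcal{T}$-maps, of the second $\mathcal{D}$-maps. $R^{\mathcal{T}}(X)$ (resp. $R^{\mathcal{D}}(X)$) is the set of indecomposables with a nonzero $\mathcal{T}$-map (resp. $\mathcal{D}$-map) to $X$, and $R(X)=R^{\mathcal{T}}(X)\cup R^{\mathcal{D}}(X)$. Wing of $X=(a,i)$, $i\le n-1$: $\mathcal{W}_X=\{(a+s,i'):s\ge0,i'\ge1,s+i'\le i\}$. $T=\bigoplus_{i=1}^{n-1}T_i$ is basic maximal rigid ($\operatorname{Ext}^1(T,T)=0$ and $\operatorname{Ext}^1(T\oplus Y,T\oplus Y)=0\Rightarrow Y\in\operatorname{add}T$); its unique summand of quasilength $n-1$ is the top summand $T_1$, all summands lie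 in $\mathcal{W}_{T_1}$, and coordinates are chosen with $T_1=(1,n-1)$. $\mathcal{F}$ is the set of indecomposables $(a,b)$, $a\in\{1,\dots,n\}$, with $b\le n-1$ or $a+b\le2n-1$. Subwing triples: non-degenerate $(X;Y,Z)$ with $X=(a,b)$, $3\le b\le n-1$, $Y=(a,c)$, $Z=(a+c+1,b-c-1)$, $1\le c\le b-2$; degenerate: $X=(a,b)$, $2\le b\le n-1$, and $(Y,Z)=((a,b-1),0)$ or $(0,(a+1,b-1))$; a $T$-subwing triple is one whose nonzero members are summands of $T$. The quiver of $\Lambda_T=\operatorname{End}_{\mathcal{C}_n}(T)^{\mathrm{op}}$ has vertex $i$ for each $T_i$ and arrows $i\to j$ for maps $T_j\to T_i$ irreducible in $\operatorname{add}T$, called $\mathcal{T}$- or $\mathcal{D}$-arrows according to the type of map. A string is a trivial string at a vertex, or a word in arrows and formal inverses with matching endpoints, no letter followed by its inverse, and no subword of it or its inverse a zero relation of $\Lambda_T$; its traversed vertices are the endpoints of its letters. *)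

theory Defs
  imports Main
begin

text \<open>An indecomposable is a pair (a,b)
  with a in {1..n} (position, taken mod n) and b >= 1 the quasilength. The module (a,b)
  is uniserial with socle S_a and composition factors S_a, S_(a+1), ..., S_(a+b-1).\<close>

type_synonym ind = "int \<times> int"
datatype kind = KT | KD
type_synonym mor = "kind \<times> ind \<times> ind \<times> int"

definition cnorm :: "int \<Rightarrow> int \<Rightarrow> int" where
  "cnorm n a = (a - 1) mod n + 1"

definition ind :: "int \<Rightarrow> ind set" where
  "ind n = {(a, b). 1 \<le> a \<and> a \<le> n \<and> 1 \<le> b}"

definition tau :: "int \<Rightarrow> ind \<Rightarrow> ind" where
  "tau n X = (cnorm n (fst X - 1), snd X)"

definition tauinv :: "int \<Rightarrow> ind \<Rightarrow> ind" where
  "tauinv n X = (cnorm n (fst X + 1), snd X)"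

text \<open>Basis of Hom_T(X,Y): the map killing the bottom t composition factors of X and
  embedding the quotient as a submodule of Y.\<close>
definition tidx :: "int \<Rightarrow> ind \<Rightarrow> ind \<Rightarrow> int set" where
  "tidx n X Y = {t. 0 \<le> t \<and> t < snd X \<and> t mod n = (fst Y - fst X) mod n \<and> snd X - t \<le> snd Y}"

text \<open>Basis of Hom_D(X, tau^-1 Y [1]) = Ext^1_T(X, tau^-1 Y) = D Hom_T(tau^-1 Y, tau X)
  (dual basis).\<close>
definition didx :: "int \<Rightarrow> ind \<Rightarrow> ind \<Rightarrow> int set" where
  "didx n X Y = tidx n (tauinv n Y) (tau n X)"

definition idx :: "int \<Rightarrow> kind \<Rightarrow> ind \<Rightarrow> ind \<Rightarrow> int set" where
  "idx n k X Y = (case k of KT \<Rightarrow> tidx n X Y | KD \<Rightarrow> didx n X Y)"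

definition morphs :: "int \<Rightarrow> ind \<Rightarrow> ind \<Rightarrow> mor set" where
  "morphs n X Y = {(k, X, Y, i) | k i. i \<in> idx n k X Y}"

definition mkind :: "mor \<Rightarrow> kind" where "mkind m = fst m"
definition msrc :: "mor \<Rightarrow> ind" where "msrc m = fst (snd m)"
definition mtgt :: "mor \<Rightarrow> ind" where "mtgt m = fst (snd (snd m))"
definition mindex :: "mor \<Rightarrow> int" where "mindex m = snd (snd (snd m))"

text \<open>Composition g o f of basis morphisms (f first), None meaning zero.
  Only used when mtgt f = msrc g.\<close>
definition comp :: "int \<Rightarrow> mor \<Rightarrow> mor \<Rightarrow> mor option" where
  "comp n g f = (let X = msrc f; Z = mtgt g; t = mindex f; u = mindex g in
     (case (mkind f, mkind g) of
        (KT, KT) \<Rightarrow> if t + u < snd X then Some (KT, X, Z, t + u) else None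
      | (KD, KT) \<Rightarrow> if t - u \<in> didx n X Z then Some (KD, X, Z, t - u) else None
      | (KT, KD) \<Rightarrow> if u - t \<in> didx n X Z then Some (KD, X, Z, u - t) else None
      | (KD, KD) \<Rightarrow> None))"

definition homC :: "int \<Rightarrow> ind \<Rightarrow> ind \<Rightarrow> bool" where
  "homC n X Y \<longleftrightarrow> tidx n X Y \<noteq> {} \<or> didx n X Y \<noteq> {}"

text \<open>In C_n we have [1] = tau, so Ext^1(X,Y) = Hom(X, tau Y).\<close>
definition ext1 :: "int \<Rightarrow> ind \<Rightarrow> ind \<Rightarrow> bool" where
  "ext1 n X Y \<longleftrightarrow> homC n X (tau n Y)"

text \<open>A basic object is represented by its (finite) set of indecomposable summands.\<close>
definition rigid :: "int \<Rightarrow> ind set \<Rightarrow> bool" where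
  "rigid n S \<longleftrightarrow> S \<subseteq> ind n \<and> (\<forall>X\<in>S. \<forall>Y\<in>S. \<not> ext1 n X Y)"

definition maxrigid :: "int \<Rightarrow> ind set \<Rightarrow> bool" where
  "maxrigid n S \<longleftrightarrow> finite S \<and> rigid n S \<and> (\<forall>Y\<in>ind n. rigid n (insert Y S) \<longrightarrow> Y \<in> S)"

definition Fregion :: "int \<Rightarrow> ind set" where
  "Fregion n = {(a, b) \<in> ind n. b \<le> n - 1 \<or> a + b \<le> 2 * n - 1}"

definition Rk :: "int \<Rightarrow> kind \<Rightarrow> ind \<Rightarrow> ind set" where
  "Rk n k X = {Y \<in> ind n. idx n k Y X \<noteq> {}}"

definition Rall :: "int \<Rightarrow> ind \<Rightarrow> ind set" where
  "Rall n X = Rk n KT X \<union> Rk n KD X"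

text \<open>Subwing triples; None stands for the zero object.\<close>
definition subwing_triple :: "int \<Rightarrow> ind \<Rightarrow> ind option \<Rightarrow> ind option \<Rightarrow> bool" where
  "subwing_triple n X Y Z \<longleftrightarrow>
     (\<exists>a b c. X = (a, b) \<and> 1 \<le> a \<and> a \<le> n \<and> 3 \<le> b \<and> b \<le> n - 1 \<and> 1 \<le> c \<and> c \<le> b - 2 \<and>
        Y = Some (a, c) \<and> Z = Some (cnorm n (a + c + 1), b - c - 1))
   \<or> (\<exists>a b. X = (a, b) \<and> 1 \<le> a \<and> a \<le> n \<and> 2 \<le> b \<and> b \<le> n - 1 \<and>
        ((Y = Some (a, b - 1) \<and> Z = None) \<or> (Y = None \<and> Z = Some (cnorm n (a + 1), b - 1))))"

definition Tsubwing :: "int \<Rightarrow> ind set \<Rightarrow> ind \<Rightarrow> ind option \<Rightarrow> ind option \<Rightarrow> bool" where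
  "Tsubwing n S X Y Z \<longleftrightarrow> subwing_triple n X Y Z \<and> X \<in> S \<and> set_option Y \<subseteq> S \<and> set_option Z \<subseteq> S"

text \<open>Radical of add T on basis morphisms: everything except identities.\<close>
definition radmorphs :: "int \<Rightarrow> ind \<Rightarrow> ind \<Rightarrow> mor set" where
  "radmorphs n X Y = morphs n X Y - {(KT, X, X, 0)}"

text \<open>Irreducible basis morphisms in add T (not in rad^2); these are the arrows of the
  quiver of End(T)^op. An arrow given by the map m : T_j -> T_i goes from vertex i to j.\<close>
definition irreducible :: "int \<Rightarrow> ind set \<Rightarrow> mor \<Rightarrow> bool" where
  "irreducible n S m \<longleftrightarrow> msrc m \<in> S \<and> mtgt m \<in> S \<and> m \<in> radmorphs n (msrc m) (mtgt m) \<and>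
     \<not> (\<exists>W\<in>S. \<exists>m1\<in>radmorphs n (msrc m) W. \<exists>m2\<in>radmorphs n W (mtgt m). comp n m2 m1 = Some m)"

definition asrc :: "mor \<Rightarrow> ind" where "asrc a = mtgt a"
definition atgt :: "mor \<Rightarrow> ind" where "atgt a = msrc a"

text \<open>Evaluation of a path a1 a2 ... am (a1 first in walking order) as a composite map.\<close>
fun peval :: "int \<Rightarrow> mor list \<Rightarrow> mor option" where
  "peval n [] = None"
| "peval n [a] = Some a"
| "peval n (a # rest) = (case peval n rest of None \<Rightarrow> None | Some m \<Rightarrow> comp n a m)"

definition zero_relation :: "int \<Rightarrow> ind set \<Rightarrow> mor list \<Rightarrow> bool" where
  "zero_relation n S p \<longleftrightarrow> p \<noteq> [] \<and> (\<forall>a\<in>set p. irreducible n S a) \<and>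
     (\<forall>i. Suc i < length p \<longrightarrow> atgt (p ! i) = asrc (p ! Suc i)) \<and> peval n p = None"

type_synonym letter = "bool \<times> mor"

definition lstart :: "letter \<Rightarrow> ind" where
  "lstart l = (if fst l then asrc (snd l) else atgt (snd l))"
definition lend :: "letter \<Rightarrow> ind" where
  "lend l = (if fst l then atgt (snd l) else asrc (snd l))"

text \<open>A string: start vertex and list of letters (True = arrow, False = formal inverse).\<close>
type_synonym qstring = "ind \<times> letter list"

definition is_string :: "int \<Rightarrow> ind set \<Rightarrow> qstring \<Rightarrow> bool" where
  "is_string n S w \<longleftrightarrow> (let v = fst w; ls = snd w in
     v \<in> S \<and> (\<forall>l\<in>set ls. irreducible n S (snd l)) \<and>
     (ls \<noteq> [] \<longrightarrow> lstart (hd ls) = v) \<and>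
     (\<forall>i. Suc i < length ls \<longrightarrow> lend (ls ! i) = lstart (ls ! Suc i) \<and>
          ls ! Suc i \<noteq> (\<not> fst (ls ! i), snd (ls ! i))) \<and>
     (\<forall>i j. i \<le> j \<and> j < length ls \<longrightarrow>
        (let seg = drop i (take (Suc j) ls) in
          ((\<forall>l\<in>set seg. fst l) \<longrightarrow> \<not> zero_relation n S (map snd seg)) \<and>
          ((\<forall>l\<in>set seg. \<not> fst l) \<longrightarrow> \<not> zero_relation n S (rev (map snd seg))))))"

definition verts :: "qstring \<Rightarrow> ind list" where
  "verts w = fst w # map lend (snd w)"

definition traverses_exactly :: "qstring \<Rightarrow> ind set \<Rightarrow> bool" where
  "traverses_exactly w A \<longleftrightarrow> distinct (verts w) \<and> set (verts w) = A"

definition endv :: "qstring \<Rightarrow> ind" where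
  "endv w = last (verts w)"

end

theory Submission imports Defs begin

lemma cnorm_range: "0 < n \<Longrightarrow> 1 \<le> cnorm n q \<and> cnorm n q \<le> n"
  unfolding cnorm_def by (simp add: pos_mod_bound add1_zle_eq)

lemma cnorm_dvd: "0 < n \<Longrightarrow> n dvd (cnorm n q - q)"
proof -
  have e: "(q - 1) div n * n + (q - 1) mod n = q - 1" by (rule div_mult_mod_eq)
  hence "cnorm n q - q = n * (- ((q - 1) div n))" unfolding cnorm_def by (simp add: algebra_simps)
  thus ?thesis by (metis dvd_triv_left)
qed

lemma cnorm_eq: "0 < n \<Longrightarrow> 1 \<le> p \<Longrightarrow> p \<le> n \<Longrightarrow> n dvd (q - p) \<Longrightarrow> cnorm n q = p"
proof -
  assume a: "0 < n" "1 \<le> p" "p \<le> n" "n dvd (q - p)"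
  have "(q - 1) mod n = (p - 1) mod n" using a(4) by (simp add: mod_eq_dvd_iff)
  also have "\<dots> = p - 1" using a by simp
  finally show ?thesis unfolding cnorm_def by simp
qed

lemma dvd_small: "0 < (n::int) \<Longrightarrow> n dvd d \<Longrightarrow> -n < d \<Longrightarrow> d < n \<Longrightarrow> d = 0"
proof -
  assume a: "0 < n" "n dvd d" "-n < d" "d < n"
  from a(2) obtain k where d: "d = n*k" by (auto simp: dvd_def)
  have "k < 1"
  proof (rule ccontr)
    assume "\<not> k < 1" then have "n*1 \<le> n*k" using a(1) by (intro mult_left_mono) auto
    with d a(4) show False by simp
  qed
  moreover have "k > -1"
  proof (rule ccontr)
    assume "\<not> k > -1" then have "n*k \<le> n*(-1)" using a(1) by (intro mult_left_mono) auto
    with d a(3) show False by simp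
  qed
  ultimately show ?thesis using d by simp
qed

lemma modeq: "(a::int) mod n = b mod n \<longleftrightarrow> n dvd (a - b)"
  by (simp add: mod_eq_dvd_iff)

lemma tidx_wing:
  assumes "2 \<le> n" "1 \<le> fst Y" "1 \<le> snd Y" "fst Y + snd Y \<le> n" "1 \<le> fst Z" "fst Z \<le> n"
  shows "tidx n Y Z = (if fst Y \<le> fst Z \<and> fst Z < fst Y + snd Y \<and> fst Y + snd Y - fst Z \<le> snd Z
                       then {fst Z - fst Y} else {})"
proof -
  obtain a b where Y: "Y = (a,b)" by (cases Y)
  obtain c d where Z: "Z = (c,d)" by (cases Z)
  have key: "t = c - a \<and> a \<le> c" if "0 \<le> t" "t < b" "n dvd (t - (c - a))" for t
  proof -
    have "t - (c - a) = 0"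
      by (rule dvd_small[OF _ that(3)]) (use assms that Y Z in auto)
    thus ?thesis using that(1) by simp
  qed
  show ?thesis
  proof (rule set_eqI)
    fix t
    show "t \<in> tidx n Y Z \<longleftrightarrow> t \<in> (if fst Y \<le> fst Z \<and> fst Z < fst Y + snd Y \<and> fst Y + snd Y - fst Z \<le> snd Z
                       then {fst Z - fst Y} else {})"
      unfolding tidx_def Y Z by (auto simp: modeq dest!: key)
  qed
qed

lemma tidx_wing_ne:
  assumes "2 \<le> n" "1 \<le> fst Y" "1 \<le> snd Y" "fst Y + snd Y \<le> n" "1 \<le> fst Z" "fst Z \<le> n"
  shows "tidx n Y Z \<noteq> {} \<longleftrightarrow> fst Y \<le> fst Z \<and> fst Z < fst Y + snd Y \<and> fst Y + snd Y - fst Z \<le> snd Z"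
  using tidx_wing[OF assms] by auto

lemma tau_tauinv: "0 < n \<Longrightarrow> 1 \<le> fst X \<Longrightarrow> fst X \<le> n \<Longrightarrow> tau n (tauinv n X) = X"
proof -
  assume a: "0 < n" "1 \<le> fst X" "fst X \<le> n"
  have "n dvd cnorm n (fst X + 1) - 1 - fst X" using cnorm_dvd[OF a(1), of "fst X + 1"] by (smt (verit))
  thus ?thesis unfolding tau_def tauinv_def using a by (cases X) (auto intro!: cnorm_eq)
qed

lemma tauinv_tau: "0 < n \<Longrightarrow> 1 \<le> fst X \<Longrightarrow> fst X \<le> n \<Longrightarrow> tauinv n (tau n X) = X"
proof -
  assume a: "0 < n" "1 \<le> fst X" "fst X \<le> n"
  have "n dvd cnorm n (fst X - 1) + 1 - fst X" using cnorm_dvd[OF a(1), of "fst X - 1"] by (smt (verit))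
  thus ?thesis unfolding tau_def tauinv_def using a by (cases X) (auto intro!: cnorm_eq)
qed

definition wing :: "int \<Rightarrow> ind \<Rightarrow> bool" where
  "wing n Y \<longleftrightarrow> 1 \<le> fst Y \<and> 1 \<le> snd Y \<and> fst Y + snd Y \<le> n"

definition cross :: "ind \<Rightarrow> ind \<Rightarrow> bool" where
  "cross Y W \<longleftrightarrow> fst Y < fst W \<and> fst W \<le> fst Y + snd Y \<and> fst Y + snd Y \<le> fst W + snd W - 1"

lemma fst_tau_wing: "2 \<le> n \<Longrightarrow> wing n W \<Longrightarrow> fst (tau n W) = (if fst W = 1 then n else fst W - 1)"
  unfolding tau_def wing_def by (auto intro!: cnorm_eq)

lemma tidx_tau_wing:
  assumes "2 \<le> n" "wing n Y" "wing n W"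
  shows "tidx n Y (tau n W) \<noteq> {} \<longleftrightarrow> cross Y W"
proof -
  have f: "fst (tau n W) = (if fst W = 1 then n else fst W - 1)" using fst_tau_wing assms by blast
  have s: "snd (tau n W) = snd W" by (simp add: tau_def)
  have r: "1 \<le> fst (tau n W) \<and> fst (tau n W) \<le> n" using f assms unfolding wing_def by auto
  show ?thesis
    using tidx_wing_ne[of n Y "tau n W"] assms r f s unfolding wing_def cross_def by auto
qed

lemma ext1_wing:
  assumes "2 \<le> n" "wing n Y" "wing n W"
  shows "ext1 n Y W \<longleftrightarrow> cross Y W \<or> cross W Y"
proof -
  have "didx n Y (tau n W) = tidx n W (tau n Y)"
    unfolding didx_def using tauinv_tau[of n W] assms unfolding wing_def by auto
  thus ?thesis unfolding ext1_def homC_def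
    using tidx_tau_wing[OF assms] tidx_tau_wing[OF assms(1,3,2)] by auto
qed

lemma S_wing:
  assumes n: "2 \<le> n" and mr: "maxrigid n S" and T1: "(1, n - 1) \<in> S" and Y: "Y \<in> S"
  shows "wing n Y"
proof -
  obtain a b where Yab: "Y = (a,b)" by (cases Y)
  have ind: "1 \<le> a" "a \<le> n" "1 \<le> b" using mr Y Yab unfolding maxrigid_def rigid_def ind_def by auto
  have r: "\<not> ext1 n Y Y" "\<not> ext1 n (1, n - 1) Y" using mr Y T1 unfolding maxrigid_def rigid_def by auto
  have "b \<le> n - 1"
  proof (rule ccontr)
    assume "\<not> b \<le> n - 1"
    have ta: "tau n Y = (cnorm n (a - 1), b)" by (simp add: tau_def Yab)
    have d: "n dvd n - (cnorm n (a - 1) - (a - 1))"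
      by (rule dvd_diff) (use cnorm_dvd[of n "a - 1"] n in auto)
    have "n - 1 \<in> tidx n Y (tau n Y)"
      unfolding tidx_def ta using \<open>\<not> b \<le> n - 1\<close> n Yab d
      by (auto simp: modeq) (smt (verit))
    thus False using r(1) unfolding ext1_def homC_def by auto
  qed
  moreover have "a + b \<le> n"
  proof (rule ccontr)
    assume c: "\<not> a + b \<le> n"
    have ta: "tau n Y = (a - 1, b)" unfolding tau_def Yab using c \<open>b \<le> n - 1\<close> ind n
      by (auto intro!: cnorm_eq)
    have "a - 2 \<in> tidx n (1, n - 1) (tau n Y)"
      unfolding tidx_def ta using c \<open>b \<le> n - 1\<close> ind n by (auto simp: modeq)
    thus False using r(2) unfolding ext1_def homC_def by auto
  qed
  ultimately show ?thesis unfolding wing_def Yab using ind by auto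
qed

lemma didx_wing:
  assumes n: "2 \<le> n" and Y: "wing n Y" and W: "wing n W"
  shows "didx n Y W = (if fst Y = 1 then (if fst W + snd W = n then {n - 1 - fst W} else {})
     else (if fst W + 2 \<le> fst Y \<and> fst Y - fst W - 2 < snd W \<and> snd W - (fst Y - fst W - 2) \<le> snd Y
           then {fst Y - fst W - 2} else {}))"
proof -
  have fi: "fst (tauinv n W) = fst W + 1" unfolding tauinv_def using n W unfolding wing_def
    by (auto intro!: cnorm_eq)
  have ft: "fst (tau n Y) = (if fst Y = 1 then n else fst Y - 1)" using fst_tau_wing n Y by blast
  have si: "snd (tauinv n W) = snd W" "snd (tau n Y) = snd Y" by (auto simp: tau_def tauinv_def)
  define c where "c = fst (tau n Y) - fst (tauinv n W)"
  have D: "didx n Y W = {t. 0 \<le> t \<and> t < snd W \<and> n dvd (t - c) \<and> snd W - t \<le> snd Y}"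
    unfolding didx_def tidx_def si modeq c_def ..
  show ?thesis
  proof (cases "fst Y = 1")
    case True
    have cc: "c = n - 1 - fst W" unfolding c_def fi ft using True by simp
    have key: "t = n - 1 - fst W" if "0 \<le> t" "t < snd W" "n dvd (t - c)" for t
    proof -
      have "t - c = 0"
        by (rule dvd_small[OF _ that(3)]) (use n W that cc in \<open>auto simp: wing_def\<close>)
      thus ?thesis using cc by simp
    qed
    show ?thesis unfolding D
    proof (rule set_eqI, rule iffI)
      fix t assume "t \<in> {t. 0 \<le> t \<and> t < snd W \<and> n dvd (t - c) \<and> snd W - t \<le> snd Y}"
      hence h: "0 \<le> t" "t < snd W" "n dvd (t - c)" "snd W - t \<le> snd Y" by auto
      with key have "t = n - 1 - fst W" by blast
      thus "t \<in> (if fst Y = 1 then (if fst W + snd W = n then {n - 1 - fst W} else {})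
     else (if fst W + 2 \<le> fst Y \<and> fst Y - fst W - 2 < snd W \<and> snd W - (fst Y - fst W - 2) \<le> snd Y
           then {fst Y - fst W - 2} else {}))" using True h W unfolding wing_def by auto
    next
      fix t assume "t \<in> (if fst Y = 1 then (if fst W + snd W = n then {n - 1 - fst W} else {})
     else (if fst W + 2 \<le> fst Y \<and> fst Y - fst W - 2 < snd W \<and> snd W - (fst Y - fst W - 2) \<le> snd Y
           then {fst Y - fst W - 2} else {}))"
      thus "t \<in> {t. 0 \<le> t \<and> t < snd W \<and> n dvd (t - c) \<and> snd W - t \<le> snd Y}"
        using True cc W Y unfolding wing_def by (auto split: if_splits)
    qed
  next
    case False
    have cc: "c = fst Y - fst W - 2" unfolding c_def fi ft using False by simp
    have key: "t = fst Y - fst W - 2" if "0 \<le> t" "t < snd W" "n dvd (t - c)" for t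
    proof -
      have "t - c = 0"
        by (rule dvd_small[OF _ that(3)]) (use n W Y False that cc in \<open>auto simp: wing_def\<close>)
      thus ?thesis using cc by simp
    qed
    show ?thesis unfolding D
    proof (rule set_eqI, rule iffI)
      fix t assume "t \<in> {t. 0 \<le> t \<and> t < snd W \<and> n dvd (t - c) \<and> snd W - t \<le> snd Y}"
      hence h: "0 \<le> t" "t < snd W" "n dvd (t - c)" "snd W - t \<le> snd Y" by auto
      with key have "t = fst Y - fst W - 2" by blast
      thus "t \<in> (if fst Y = 1 then (if fst W + snd W = n then {n - 1 - fst W} else {})
     else (if fst W + 2 \<le> fst Y \<and> fst Y - fst W - 2 < snd W \<and> snd W - (fst Y - fst W - 2) \<le> snd Y
           then {fst Y - fst W - 2} else {}))" using False h W unfolding wing_def by auto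
    next
      fix t assume "t \<in> (if fst Y = 1 then (if fst W + snd W = n then {n - 1 - fst W} else {})
     else (if fst W + 2 \<le> fst Y \<and> fst Y - fst W - 2 < snd W \<and> snd W - (fst Y - fst W - 2) \<le> snd Y
           then {fst Y - fst W - 2} else {}))"
      thus "t \<in> {t. 0 \<le> t \<and> t < snd W \<and> n dvd (t - c) \<and> snd W - t \<le> snd Y}"
        using False cc W Y unfolding wing_def by (auto split: if_splits)
    qed
  qed
qed

definition tm :: "ind \<Rightarrow> ind \<Rightarrow> mor" where
  "tm Y W = (KT, Y, W, fst W - fst Y)"

definition cont :: "ind \<Rightarrow> int \<Rightarrow> bool" where
  "cont Y p \<longleftrightarrow> fst Y \<le> p \<and> p \<le> fst Y + snd Y - 1"

definition sub :: "ind \<Rightarrow> ind \<Rightarrow> bool" where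
  "sub U Y \<longleftrightarrow> fst Y \<le> fst U \<and> fst U + snd U \<le> fst Y + snd Y"

lemma radmorphs_iff: "m \<in> radmorphs n X Y \<longleftrightarrow> (\<exists>k i. m = (k, X, Y, i) \<and> i \<in> idx n k X Y) \<and> m \<noteq> (KT, X, X, 0)"
  unfolding radmorphs_def morphs_def by auto

locale chainctx =
  fixes n :: int and S :: "ind set" and C :: "ind set" and p :: int
  assumes n2: "2 \<le> n" and mr: "maxrigid n S" and T1: "(1, n - 1) \<in> S" and CS: "C \<subseteq> S"
    and CP: "\<And>Y. Y \<in> C \<Longrightarrow> cont Y p"
    and DC: "\<And>Y U. Y \<in> C \<Longrightarrow> U \<in> S \<Longrightarrow> cont U p \<Longrightarrow> sub U Y \<Longrightarrow> U \<in> C"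
begin

lemma wS: "Y \<in> S \<Longrightarrow> wing n Y" using S_wing n2 mr T1 by blast

lemma wC: "Y \<in> C \<Longrightarrow> wing n Y" using wS CS by blast

lemma nocross: "Y \<in> S \<Longrightarrow> W \<in> S \<Longrightarrow> \<not> cross Y W"
proof -
  assume a: "Y \<in> S" "W \<in> S"
  have "\<not> ext1 n Y W" using mr a unfolding maxrigid_def rigid_def by auto
  thus ?thesis using ext1_wing[OF n2 wS[OF a(1)] wS[OF a(2)]] by auto
qed

lemma nested: "Y \<in> C \<Longrightarrow> W \<in> C \<Longrightarrow> sub Y W \<or> sub W Y"
proof -
  assume a: "Y \<in> C" "W \<in> C"
  have "\<not> cross Y W" "\<not> cross W Y" using nocross[of Y W] nocross[of W Y] a CS by auto
  moreover have "cont Y p" "cont W p" using CP a by auto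
  ultimately show ?thesis unfolding cross_def cont_def sub_def by auto
qed

lemma eq_of_snd: "Y \<in> C \<Longrightarrow> W \<in> C \<Longrightarrow> snd Y = snd W \<Longrightarrow> Y = W"
  using nested[of Y W] unfolding sub_def by (auto simp: prod_eq_iff)

lemma sub_of_lt: "Y \<in> C \<Longrightarrow> W \<in> C \<Longrightarrow> snd Y < snd W \<Longrightarrow> sub Y W"
  using nested[of Y W] wC[of Y] wC[of W] unfolding sub_def wing_def by auto

lemma share:
  assumes Y: "Y \<in> C" and W: "W \<in> C" and lt: "snd Y < snd W"
    and nb: "\<not> (\<exists>U\<in>C. snd Y < snd U \<and> snd U < snd W)"
  shows "fst Y = fst W \<or> fst Y + snd Y = fst W + snd W"
proof (rule ccontr)
  assume c: "\<not> (fst Y = fst W \<or> fst Y + snd Y = fst W + snd W)"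
  have sYW: "sub Y W" using sub_of_lt Y W lt by blast
  define U where "U = (fst W, fst Y + snd Y - fst W)"
  have wY: "wing n Y" and wW: "wing n W" using wC Y W by auto
  have wU: "wing n U" using wY wW sYW c unfolding U_def wing_def sub_def by auto
  have cY: "cont Y p" using CP Y by blast
  have betw: "(fst V = fst Y \<and> snd V = snd Y) \<or> (fst V = fst W \<and> snd V = snd W)"
    if "V \<in> S" "sub Y V" "sub V W" for V
  proof -
    have "cont V p" using cY that unfolding cont_def sub_def by auto
    hence "V \<in> C" using DC[OF W that(1)] that(3) by blast
    thus ?thesis using nb that(2,3) unfolding sub_def
      by (smt (verit, best))
  qed
  have compat: "\<not> cross V U \<and> \<not> cross U V" if "V \<in> S" for V
  proof -
    have h: "\<not> cross V Y" "\<not> cross Y V" "\<not> cross V W" "\<not> cross W V"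
      using nocross[of V Y] nocross[of Y V] nocross[of V W] nocross[of W V] that Y W CS by auto
    have wV: "wing n V" using wS that by blast
    have b: "sub Y V \<and> sub V W \<longrightarrow> (fst V = fst Y \<and> snd V = snd Y) \<or> (fst V = fst W \<and> snd V = snd W)"
      using betw that by blast
    show ?thesis using h b wV wY wW sYW c unfolding U_def cross_def sub_def wing_def
      by (simp only: fst_conv snd_conv) (smt (verit))
  qed
  have Uind: "U \<in> ind n" using wU unfolding wing_def ind_def by (cases U) auto
  have "rigid n (insert U S)"
  proof -
    have SI: "S \<subseteq> ind n" using mr unfolding maxrigid_def rigid_def by auto
    have "\<not> ext1 n A B" if "A \<in> insert U S" "B \<in> insert U S" for A B
    proof -
      have wA: "wing n A" using that(1) wU wS by blast
      have wB: "wing n B" using that(2) wU wS by blast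
      have "\<not> cross A B"
        using that compat nocross unfolding cross_def by (auto simp: cross_def)
      moreover have "\<not> cross B A"
        using that compat nocross unfolding cross_def by (auto simp: cross_def)
      ultimately show ?thesis using ext1_wing[OF n2 wA wB] by auto
    qed
    thus ?thesis unfolding rigid_def using SI Uind by auto
  qed
  hence US: "U \<in> S" using mr Uind unfolding maxrigid_def by auto
  have "cont U p" using cY sYW c unfolding U_def cont_def sub_def by auto
  moreover have "sub U W" unfolding U_def sub_def using sYW by (auto simp: sub_def)
  ultimately have "U \<in> C" using DC[OF W US] by blast
  moreover have "snd Y < snd U" "snd U < snd W" using sYW c unfolding U_def sub_def by auto
  ultimately show False using nb by blast
qed

lemma wT1: "wing n (1, n - 1)" using n2 unfolding wing_def by auto

lemma D_not_irr:
  assumes Y: "Y \<in> C" and W: "W \<in> C" and ne: "Y \<noteq> W" and i: "i \<in> didx n Y W"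
  shows "\<not> irreducible n S (KD, Y, W, i)"
proof (cases "fst Y = 1")
  case False
  have wY: "wing n Y" and wW: "wing n W" using wC Y W by auto
  have h: "fst W + 2 \<le> fst Y \<and> fst Y - fst W - 2 < snd W \<and> snd W - (fst Y - fst W - 2) \<le> snd Y"
    using i didx_wing[OF n2 wY wW] False by (auto split: if_splits)
  have "\<not> cross W Y" using nocross[of W Y] W Y CS by blast
  moreover have "cont Y p" "cont W p" using CP Y W by auto
  ultimately have False using h unfolding cross_def cont_def by auto
  thus ?thesis ..
next
  case True
  have wY: "wing n Y" and wW: "wing n W" using wC Y W by auto
  have h: "fst W + snd W = n" "i = n - 1 - fst W"
    using i didx_wing[OF n2 wY wW] True by (auto split: if_splits)
  have dT1W: "n - 1 - fst W \<in> didx n (1, n - 1) W"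
    using didx_wing[OF n2 wT1 wW] h by auto
  show ?thesis
  proof (cases "Y = (1, n - 1)")
    case False
    have m1: "(KT, Y, (1, n - 1), 0) \<in> radmorphs n Y (1, n - 1)"
      unfolding radmorphs_iff idx_def using tidx_wing[OF n2, of Y "(1, n - 1)"] wY True False n2
      by (auto simp: wing_def)
    have m2: "(KD, (1, n - 1), W, n - 1 - fst W) \<in> radmorphs n (1, n - 1) W"
      unfolding radmorphs_iff idx_def using dT1W by auto
    have c: "comp n (KD, (1, n - 1), W, n - 1 - fst W) (KT, Y, (1, n - 1), 0) = Some (KD, Y, W, i)"
      unfolding comp_def msrc_def mtgt_def mindex_def mkind_def using i h by auto
    show ?thesis unfolding irreducible_def msrc_def mtgt_def using T1 m1 m2 c by fastforce
  next
    case YT: True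
    have WT: "W \<noteq> (1, n - 1)" using ne YT by auto
    have fW: "2 \<le> fst W" using WT h wW unfolding wing_def by (cases W) auto
    have m1: "(KD, (1, n - 1), (1, n - 1), n - 2) \<in> radmorphs n (1, n - 1) (1, n - 1)"
      unfolding radmorphs_iff idx_def using didx_wing[OF n2 wT1 wT1] by auto
    have m2: "(KT, (1, n - 1), W, fst W - 1) \<in> radmorphs n (1, n - 1) W"
      unfolding radmorphs_iff idx_def using tidx_wing[OF n2, of "(1, n - 1)" W] wW fW h n2 WT
      by (auto simp: wing_def)
    have c: "comp n (KT, (1, n - 1), W, fst W - 1) (KD, (1, n - 1), (1, n - 1), n - 2) = Some (KD, Y, W, i)"
      unfolding comp_def msrc_def mtgt_def mindex_def mkind_def using i h YT dT1W by auto
    show ?thesis unfolding irreducible_def msrc_def mtgt_def using T1 m1 m2 c YT by fastforce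
  qed
qed

definition tc :: "ind \<Rightarrow> ind \<Rightarrow> bool" where
  "tc Y W \<longleftrightarrow> fst Y \<le> fst W \<and> fst W < fst Y + snd Y \<and> fst Y + snd Y - fst W \<le> snd W"

lemma tidxS: "Y \<in> S \<Longrightarrow> W \<in> S \<Longrightarrow> tidx n Y W = (if tc Y W then {fst W - fst Y} else {})"
  using tidx_wing[OF n2, of Y W] wS[of Y] wS[of W] unfolding tc_def wing_def by auto

lemma comp_KT:
  assumes "comp n (k2, U, W, i2) (k1, Y, U, i1) = Some (KT, Y, W, j)"
  shows "k1 = KT \<and> k2 = KT \<and> i1 + i2 = j \<and> i1 + i2 < snd Y"
  using assms unfolding comp_def msrc_def mtgt_def mindex_def mkind_def
  by (cases k1; cases k2) (auto split: if_splits)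

lemma irr_tm:
  assumes Y: "Y \<in> C" and W: "W \<in> C" and ne: "Y \<noteq> W" and t: "tc Y W"
    and nb: "\<forall>U\<in>C. \<not> (snd Y < snd U \<and> snd U < snd W) \<and> \<not> (snd W < snd U \<and> snd U < snd Y)"
  shows "irreducible n S (tm Y W)"
proof -
  have YS: "Y \<in> S" and WS: "W \<in> S" using Y W CS by auto
  have rad: "tm Y W \<in> radmorphs n Y W"
    unfolding radmorphs_iff idx_def tm_def using tidxS[OF YS WS] t ne by auto
  have nofac: False if U: "U \<in> S" and m1: "m1 \<in> radmorphs n Y U" and m2: "m2 \<in> radmorphs n U W"
    and c: "comp n m2 m1 = Some (tm Y W)" for U m1 m2
  proof -
    obtain k1 i1 where m1e: "m1 = (k1, Y, U, i1)" "i1 \<in> idx n k1 Y U" "m1 \<noteq> (KT, Y, Y, 0)"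
      using m1 unfolding radmorphs_iff by auto
    obtain k2 i2 where m2e: "m2 = (k2, U, W, i2)" "i2 \<in> idx n k2 U W" "m2 \<noteq> (KT, U, U, 0)"
      using m2 unfolding radmorphs_iff by auto
    have kk: "k1 = KT" "k2 = KT" "i1 + i2 = fst W - fst Y"
      using comp_KT[of k2 U W i2 k1 Y i1 "fst W - fst Y"] c m1e m2e unfolding tm_def by auto
    have i1: "tc Y U" "i1 = fst U - fst Y" using m1e(2) kk tidxS[OF YS U] unfolding idx_def
      by (auto split: if_splits)
    have i2: "tc U W" "i2 = fst W - fst U" using m2e(2) kk tidxS[OF U WS] unfolding idx_def
      by (auto split: if_splits)
    have UY: "U \<noteq> Y" using m1e(3) m1e(1) kk i1 by auto
    have UW: "U \<noteq> W" using m2e(3) m2e(1) kk i2 by auto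
    have cY: "cont Y p" and cW: "cont W p" using CP Y W by auto
    consider "sub Y W" | "sub W Y" using nested Y W by blast
    thus False
    proof cases
      case 1
      have "cont U p" "sub U W" using 1 t i1 i2 cY unfolding sub_def tc_def cont_def by auto
      hence UC: "U \<in> C" using DC[OF W U] by blast
      have "snd Y \<le> snd U" "snd U \<le> snd W" using 1 t i1 i2 unfolding sub_def tc_def by auto
      moreover have "snd U \<noteq> snd Y" "snd U \<noteq> snd W" using eq_of_snd[OF UC Y] eq_of_snd[OF UC W] UY UW by auto
      ultimately show False using nb UC by force
    next
      case 2
      have "cont U p" "sub U Y" using 2 t i1 i2 cW unfolding sub_def tc_def cont_def by auto
      hence UC: "U \<in> C" using DC[OF Y U] by blast
      have "snd W \<le> snd U" "snd U \<le> snd Y" using 2 t i1 i2 unfolding sub_def tc_def by auto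
      moreover have "snd U \<noteq> snd Y" "snd U \<noteq> snd W" using eq_of_snd[OF UC Y] eq_of_snd[OF UC W] UY UW by auto
      ultimately show False using nb UC by force
    qed
  qed
  show ?thesis unfolding irreducible_def
    using YS WS rad nofac unfolding tm_def msrc_def mtgt_def by auto
qed

lemma irr_inv:
  assumes Y: "Y \<in> C" and W: "W \<in> C" and ne: "Y \<noteq> W" and irr: "irreducible n S m"
    and s: "msrc m = Y" and tg: "mtgt m = W"
  shows "m = tm Y W \<and> tc Y W \<and>
    (\<forall>U\<in>C. \<not> (snd Y < snd U \<and> snd U < snd W) \<and> \<not> (snd W < snd U \<and> snd U < snd Y))"
proof -
  have YS: "Y \<in> S" and WS: "W \<in> S" using Y W CS by auto
  have "m \<in> radmorphs n Y W" using irr s tg unfolding irreducible_def by auto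
  then obtain k i where me: "m = (k, Y, W, i)" "i \<in> idx n k Y W" unfolding radmorphs_iff by auto
  have kT: "k = KT"
  proof (cases k)
    case KD thus ?thesis using D_not_irr[OF Y W ne] me irr unfolding idx_def by auto
  qed auto
  have t: "tc Y W" "i = fst W - fst Y" using me kT tidxS[OF YS WS] unfolding idx_def
    by (auto split: if_splits)
  have mt: "m = tm Y W" using me kT t unfolding tm_def by auto
  have nb: False if U: "U \<in> C" and btw: "(snd Y < snd U \<and> snd U < snd W) \<or> (snd W < snd U \<and> snd U < snd Y)" for U
  proof -
    have US: "U \<in> S" using U CS by auto
    have UY: "U \<noteq> Y" "U \<noteq> W" using btw by auto
    have fac: "tc Y U \<and> tc U W \<and> fst W - fst Y < snd Y"
    proof (cases "snd Y < snd W")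
      case True
      have s1: "sub Y U" "sub U W" "sub Y W" using sub_of_lt[OF Y U] sub_of_lt[OF U W] sub_of_lt[OF Y W] btw True by auto
      show ?thesis using s1 t unfolding sub_def tc_def by auto
    next
      case False
      have s1: "sub W U" "sub U Y" "sub W Y" using sub_of_lt[OF W U] sub_of_lt[OF U Y] sub_of_lt[OF W Y] btw False by auto
      show ?thesis using s1 t unfolding sub_def tc_def by auto
    qed
    have r1: "tm Y U \<in> radmorphs n Y U"
      unfolding radmorphs_iff idx_def tm_def using tidxS[OF YS US] fac UY by auto
    have r2: "tm U W \<in> radmorphs n U W"
      unfolding radmorphs_iff idx_def tm_def using tidxS[OF US WS] fac UY by auto
    have c: "comp n (tm U W) (tm Y U) = Some m"
      unfolding comp_def tm_def msrc_def mtgt_def mindex_def mkind_def mt using fac by auto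
    show False using irr US r1 r2 c s tg unfolding irreducible_def by blast
  qed
  show ?thesis using mt t nb by blast
qed

lemma finC: "finite C"
  using mr CS unfolding maxrigid_def by (auto intro: finite_subset)

lemma inj_snd: "inj_on snd C"
  using eq_of_snd by (auto simp: inj_on_def)

lemma len_verts: "length (verts w) = Suc (length (snd w))"
  unfolding verts_def by simp

lemma verts_Suc: "i < length (snd w) \<Longrightarrow> verts w ! Suc i = lend (snd w ! i)"
  unfolding verts_def by simp

lemma verts_0: "verts w ! 0 = fst w"
  unfolding verts_def by simp

lemma lstart_nth:
  assumes s: "is_string n S w" and i: "i < length (snd w)"
  shows "lstart (snd w ! i) = verts w ! i"
proof (cases i)
  case 0
  have "snd w \<noteq> []" using i by auto
  hence "lstart (hd (snd w)) = fst w" using s unfolding is_string_def Let_def by auto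
  thus ?thesis using 0 verts_0 \<open>snd w \<noteq> []\<close> by (simp add: hd_conv_nth)
next
  case (Suc k)
  have "lend (snd w ! k) = lstart (snd w ! Suc k)" using s i Suc unfolding is_string_def Let_def by auto
  thus ?thesis using verts_Suc[of k w] Suc i by auto
qed

lemma string_letter:
  assumes s: "is_string n S w" and tr: "traverses_exactly w C" and i: "i < length (snd w)"
  shows "verts w ! i \<in> C \<and> verts w ! Suc i \<in> C \<and> verts w ! i \<noteq> verts w ! Suc i \<and>
    (if fst (snd w ! i) then snd (snd w ! i) = tm (verts w ! Suc i) (verts w ! i) \<and> tc (verts w ! Suc i) (verts w ! i)
     else snd (snd w ! i) = tm (verts w ! i) (verts w ! Suc i) \<and> tc (verts w ! i) (verts w ! Suc i)) \<and>
    (\<forall>U\<in>C. \<not> (snd (verts w ! i) < snd U \<and> snd U < snd (verts w ! Suc i)) \<and>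
            \<not> (snd (verts w ! Suc i) < snd U \<and> snd U < snd (verts w ! i)))"
proof -
  define A where "A = verts w ! i"
  define B where "B = verts w ! Suc i"
  have lv: "Suc i < length (verts w)" using i len_verts by auto
  have AC: "A \<in> C" and BC: "B \<in> C" using tr lv unfolding traverses_exactly_def A_def B_def
    by (metis Suc_lessD nth_mem)+
  have AB: "A \<noteq> B" using tr lv unfolding traverses_exactly_def A_def B_def
    by (auto simp: nth_eq_iff_index_eq)
  have st: "lstart (snd w ! i) = A" using lstart_nth[OF s i] A_def by simp
  have en: "lend (snd w ! i) = B" using verts_Suc[OF i] B_def by simp
  have irr: "irreducible n S (snd (snd w ! i))" using s i unfolding is_string_def Let_def by auto
  show ?thesis
  proof (cases "fst (snd w ! i)")
    case True
    have "msrc (snd (snd w ! i)) = B" "mtgt (snd (snd w ! i)) = A"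
      using st en True unfolding lstart_def lend_def asrc_def atgt_def by auto
    hence "snd (snd w ! i) = tm B A \<and> tc B A \<and>
      (\<forall>U\<in>C. \<not> (snd B < snd U \<and> snd U < snd A) \<and> \<not> (snd A < snd U \<and> snd U < snd B))"
      using irr_inv[OF BC AC AB[symmetric] irr] by auto
    thus ?thesis using AC BC AB True unfolding A_def B_def by auto
  next
    case False
    have "msrc (snd (snd w ! i)) = A" "mtgt (snd (snd w ! i)) = B"
      using st en False unfolding lstart_def lend_def asrc_def atgt_def by auto
    hence "snd (snd w ! i) = tm A B \<and> tc A B \<and>
      (\<forall>U\<in>C. \<not> (snd A < snd U \<and> snd U < snd B) \<and> \<not> (snd B < snd U \<and> snd U < snd A))"
      using irr_inv[OF AC BC AB irr] by auto
    thus ?thesis using AC BC AB False unfolding A_def B_def by auto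
  qed
qed

lemma part4:
  assumes s: "is_string n S w" and tr: "traverses_exactly w C"
  shows "\<forall>l\<in>set (snd w). mkind (snd l) = KT"
proof
  fix l assume "l \<in> set (snd w)"
  then obtain i where i: "i < length (snd w)" "l = snd w ! i" by (auto simp: in_set_conv_nth)
  show "mkind (snd l) = KT" using string_letter[OF s tr i(1)] i(2)
    by (auto simp: tm_def mkind_def split: if_splits)
qed

lemma walk_sorted:
  fixes xs :: "int list"
  assumes d: "distinct xs" and ne: "xs \<noteq> []" and mx: "\<forall>y\<in>set xs. y \<le> last xs"
    and nb: "\<forall>i. Suc i < length xs \<longrightarrow> (\<forall>y\<in>set xs. \<not> (xs!i < y \<and> y < xs!Suc i) \<and> \<not> (xs!Suc i < y \<and> y < xs!i))"
  shows "sorted xs"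
  unfolding sorted_iff_nth_Suc
proof (intro allI impI, rule ccontr)
  fix i assume i: "Suc i < length xs" and c: "\<not> xs ! i \<le> xs ! Suc i"
  define J where "J = {j. i < j \<and> j < length xs \<and> xs!i \<le> xs!j}"
  define L where "L = length xs - 1"
  have LJ: "L \<in> J" unfolding J_def L_def using i mx ne by (auto simp: last_conv_nth)
  define j where "j = (LEAST j. j \<in> J)"
  have jJ: "j \<in> J" unfolding j_def using LJ by (rule LeastI)
  have jmin: "\<And>j'. j' \<in> J \<Longrightarrow> j \<le> j'" unfolding j_def by (rule Least_le)
  have jne: "j \<noteq> Suc i" using jJ c unfolding J_def by auto
  obtain k where k: "j = Suc k" using jJ unfolding J_def by (cases j) auto
  have ik: "i < k" using jJ jne k unfolding J_def by auto
  have kJ: "k \<notin> J" using jmin k by fastforce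
  have kl: "Suc k < length xs" using jJ k unfolding J_def by auto
  have xk: "xs!k < xs!i" using kJ ik kl unfolding J_def by auto
  have xj: "xs!i \<le> xs!j" using jJ unfolding J_def by auto
  have "xs!i \<in> set xs" using i by auto
  hence "\<not> (xs!k < xs!i \<and> xs!i < xs!Suc k)" using nb kl by blast
  hence "xs!i = xs!j" using xk xj k by auto
  moreover have "i < length xs" "j < length xs" using i jJ unfolding J_def by auto
  ultimately have "i = j" using d by (simp add: nth_eq_iff_index_eq)
  thus False using jJ unfolding J_def by auto
qed

definition ys0 :: "int list" where "ys0 = sorted_list_of_set (snd ` C)"
definition cs :: "ind list" where "cs = map (the_inv_into C snd) ys0"

lemma ys0_props: "sorted ys0" "distinct ys0" "set ys0 = snd ` C"
  unfolding ys0_def using finC by auto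

lemma cs_props: "map snd cs = ys0" "set cs = C" "distinct cs"
proof -
  show m: "map snd cs = ys0" unfolding cs_def map_map
    by (rule map_idI) (use ys0_props(3) inj_snd in \<open>auto intro: f_the_inv_into_f\<close>)
  show s: "set cs = C" unfolding cs_def set_map ys0_props(3)
    by (rule the_inv_into_onto[OF inj_snd])
  show "distinct cs" using ys0_props(2) m by (metis distinct_map)
qed

lemma valid_verts:
  assumes s: "is_string n S w" and tr: "traverses_exactly w C" and mx: "\<forall>u\<in>C. snd u \<le> snd (endv w)"
  shows "verts w = cs"
proof -
  define xs where "xs = map snd (verts w)"
  have dv: "distinct (verts w)" and sv: "set (verts w) = C" using tr unfolding traverses_exactly_def by auto
  have dx: "distinct xs" unfolding xs_def using dv inj_snd sv by (simp add: distinct_map)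
  have ne: "xs \<noteq> []" unfolding xs_def verts_def by simp
  have sx: "set xs = snd ` C" unfolding xs_def using sv by simp
  have lx: "last xs = snd (endv w)" unfolding xs_def endv_def verts_def by (simp add: last_map)
  have mxx: "\<forall>y\<in>set xs. y \<le> last xs" using mx sx lx by auto
  have nbx: "\<forall>i. Suc i < length xs \<longrightarrow> (\<forall>y\<in>set xs. \<not> (xs!i < y \<and> y < xs!Suc i) \<and> \<not> (xs!Suc i < y \<and> y < xs!i))"
  proof (intro allI impI ballI)
    fix i y assume i: "Suc i < length xs" and y: "y \<in> set xs"
    have il: "i < length (snd w)" using i unfolding xs_def by (simp add: len_verts)
    obtain U where U: "U \<in> C" "y = snd U" using y sx by auto
    have "xs!i = snd (verts w ! i)" "xs ! Suc i = snd (verts w ! Suc i)" using i unfolding xs_def by auto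
    thus "\<not> (xs!i < y \<and> y < xs!Suc i) \<and> \<not> (xs!Suc i < y \<and> y < xs!i)"
      using string_letter[OF s tr il] U by auto
  qed
  have "sorted xs" by (rule walk_sorted[OF dx ne mxx nbx])
  hence "xs = ys0" using sorted_distinct_set_unique[of xs ys0] dx ys0_props sx by auto
  hence "map snd (verts w) = map snd cs" using cs_props(1) xs_def by simp
  moreover have "inj_on snd (set (verts w) \<union> set cs)" using sv cs_props(2) inj_snd by simp
  ultimately show ?thesis using inj_on_map_eq_map by blast
qed

lemma letter_det:
  assumes s: "is_string n S w" and tr: "traverses_exactly w C" and s': "is_string n S w'"
    and tr': "traverses_exactly w' C" and v: "verts w = verts w'"
  shows "w = w'"
proof -
  have len: "length (snd w) = length (snd w')" using v len_verts by (metis Suc_inject)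
  have "snd w ! i = snd w' ! i" if i: "i < length (snd w)" for i
  proof -
    have i': "i < length (snd w')" using i len by simp
    have a: "verts w ! i \<noteq> verts w ! Suc i \<and>
      (if fst (snd w ! i) then snd (snd w ! i) = tm (verts w ! Suc i) (verts w ! i) \<and> tc (verts w ! Suc i) (verts w ! i)
       else snd (snd w ! i) = tm (verts w ! i) (verts w ! Suc i) \<and> tc (verts w ! i) (verts w ! Suc i))"
      using string_letter[OF s tr i] by blast
    have b: "(if fst (snd w' ! i) then snd (snd w' ! i) = tm (verts w ! Suc i) (verts w ! i) \<and> tc (verts w ! Suc i) (verts w ! i)
       else snd (snd w' ! i) = tm (verts w ! i) (verts w ! Suc i) \<and> tc (verts w ! i) (verts w ! Suc i))"
      using string_letter[OF s' tr' i'] v by simp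
    have tcab: False if "tc A B" "tc B A" "A \<noteq> B" for A B :: ind
      using that unfolding tc_def by (auto simp: prod_eq_iff)
    show ?thesis
    proof (cases "fst (snd w ! i)"; cases "fst (snd w' ! i)")
      assume "fst (snd w ! i)" "fst (snd w' ! i)"
      thus ?thesis using a b by (simp add: prod_eq_iff)
    next
      assume "\<not> fst (snd w ! i)" "\<not> fst (snd w' ! i)"
      thus ?thesis using a b by (simp add: prod_eq_iff)
    next
      assume "fst (snd w ! i)" "\<not> fst (snd w' ! i)"
      thus ?thesis using a b tcab by (metis (full_types))
    next
      assume "\<not> fst (snd w ! i)" "fst (snd w' ! i)"
      thus ?thesis using a b tcab by (metis (full_types))
    qed
  qed
  hence "snd w = snd w'" using len by (intro nth_equalityI) auto
  moreover have "fst w = fst w'" using v verts_0 by metis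
  ultimately show ?thesis by (simp add: prod_eq_iff)
qed

lemma peval_Cons: "rest \<noteq> [] \<Longrightarrow> peval n (a # rest) = (case peval n rest of None \<Rightarrow> None | Some m \<Rightarrow> comp n a m)"
  by (cases rest) auto

lemma PE1:
  fixes o' :: "nat \<Rightarrow> ind"
  assumes ik: "i \<le> k"
    and h: "\<forall>r. i \<le> r \<and> r \<le> k \<longrightarrow> fst (o' r) + snd (o' r) = fst (o' (Suc r)) + snd (o' (Suc r)) \<and> 1 \<le> snd (o' r)"
  shows "peval n (map (\<lambda>r. tm (o' (Suc r)) (o' r)) [i..<Suc k]) = Some (KT, o' (Suc k), o' i, fst (o' i) - fst (o' (Suc k)))
     \<and> fst (o' i) + snd (o' i) = fst (o' (Suc k)) + snd (o' (Suc k))"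
  using ik
proof (induction i rule: inc_induct)
  case base
  show ?case using h[rule_format, of k] ik by (simp add: tm_def)
next
  case (step m)
  have up: "[m..<Suc k] = m # [Suc m..<Suc k]" using step.hyps by (simp add: upt_conv_Cons)
  have ne: "map (\<lambda>r. tm (o' (Suc r)) (o' r)) [Suc m..<Suc k] \<noteq> []" using step.hyps by simp
  have hm: "fst (o' m) + snd (o' m) = fst (o' (Suc m)) + snd (o' (Suc m))" "1 \<le> snd (o' m)"
    using h step.hyps by auto
  show ?case unfolding up list.map peval_Cons[OF ne] using step.IH hm
    by (auto simp: comp_def tm_def msrc_def mtgt_def mindex_def mkind_def Let_def)
qed

lemma PE2:
  fixes o' :: "nat \<Rightarrow> ind"
  assumes ik: "i \<le> k"
    and h: "\<forall>r. i \<le> r \<and> r \<le> k \<longrightarrow> fst (o' r) = fst (o' (Suc r)) \<and> 1 \<le> snd (o' r)"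
  shows "peval n (rev (map (\<lambda>r. tm (o' r) (o' (Suc r))) [i..<Suc k])) = Some (KT, o' i, o' (Suc k), 0)
     \<and> fst (o' (Suc k)) = fst (o' i)"
  using ik
proof (induction k rule: dec_induct)
  case base
  show ?case using h[rule_format, of i] ik by (simp add: tm_def)
next
  case (step m)
  have ne: "rev (map (\<lambda>r. tm (o' r) (o' (Suc r))) [i..<Suc m]) \<noteq> []" using step.hyps by simp
  have hm: "fst (o' (Suc m)) = fst (o' (Suc (Suc m)))" "1 \<le> snd (o' i)"
    using h step.hyps by auto
  show ?case using peval_Cons[OF ne, of "tm (o' (Suc m)) (o' (Suc (Suc m)))"] step.IH hm step.hyps
    by (auto simp: comp_def tm_def msrc_def mtgt_def mindex_def mkind_def)
qed

lemma cs_nth: "i < length cs \<Longrightarrow> cs ! i \<in> C"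
  using cs_props(2) nth_mem by blast

lemma cs_snd: "i < length cs \<Longrightarrow> snd (cs ! i) = ys0 ! i"
  using cs_props(1) by (metis nth_map)

lemma cs_adj:
  assumes i: "Suc i < length cs"
  shows "snd (cs!i) < snd (cs!Suc i) \<and>
    (\<forall>U\<in>C. \<not> (snd (cs!i) < snd U \<and> snd U < snd (cs!Suc i)) \<and> \<not> (snd (cs!Suc i) < snd U \<and> snd U < snd (cs!i)))"
proof -
  have lens: "length ys0 = length cs" using cs_props(1) by (metis length_map)
  have sw: "sorted_wrt (<) ys0" using ys0_props strict_sorted_iff by blast
  have lt: "ys0 ! i < ys0 ! Suc i" using sorted_wrt_nth_less[OF sw, of i "Suc i"] i lens by auto
  have nb: False if U: "U \<in> C" and b: "ys0!i < snd U" "snd U < ys0 ! Suc i" for U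
  proof -
    have "snd U \<in> set ys0" using U ys0_props(3) by auto
    then obtain k where k: "k < length ys0" "ys0 ! k = snd U" by (auto simp: in_set_conv_nth)
    have "\<not> k \<le> i" using sorted_nth_mono[OF ys0_props(1), of k i] k b i lens by auto
    moreover have "\<not> Suc i \<le> k" using sorted_nth_mono[OF ys0_props(1), of "Suc i" k] k b by auto
    ultimately show False by auto
  qed
  show ?thesis using lt nb cs_snd[of i] cs_snd[of "Suc i"] i by fastforce
qed

definition lt :: "nat \<Rightarrow> letter" where
  "lt i = (if fst (cs!i) = fst (cs!Suc i) then (False, tm (cs!i) (cs!Suc i)) else (True, tm (cs!Suc i) (cs!i)))"

lemma lt_props:
  assumes i: "Suc i < length cs"
  shows "lstart (lt i) = cs!i \<and> lend (lt i) = cs!Suc i \<and> irreducible n S (snd (lt i)) \<and>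
    (fst (lt i) \<longrightarrow> fst (cs!i) + snd (cs!i) = fst (cs!Suc i) + snd (cs!Suc i) \<and> snd (lt i) = tm (cs!Suc i) (cs!i)) \<and>
    (\<not> fst (lt i) \<longrightarrow> fst (cs!i) = fst (cs!Suc i) \<and> snd (lt i) = tm (cs!i) (cs!Suc i))"
proof -
  define A where "A = cs!i"
  define B where "B = cs!Suc i"
  have AC: "A \<in> C" and BC: "B \<in> C" unfolding A_def B_def using cs_nth i by auto
  have adj: "snd A < snd B" "\<forall>U\<in>C. \<not> (snd A < snd U \<and> snd U < snd B) \<and> \<not> (snd B < snd U \<and> snd U < snd A)"
    using cs_adj[OF i] unfolding A_def B_def by auto
  have AB: "A \<noteq> B" using adj by auto
  have sAB: "sub A B" using sub_of_lt[OF AC BC adj(1)] .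
  have sh: "fst A = fst B \<or> fst A + snd A = fst B + snd B"
    using share[OF AC BC adj(1)] adj(2) by blast
  have wA: "wing n A" using wC AC by blast
  show ?thesis
  proof (cases "fst A = fst B")
    case True
    have t: "tc A B" using True sAB adj wA unfolding tc_def sub_def wing_def by auto
    have "irreducible n S (tm A B)" by (rule irr_tm[OF AC BC AB t]) (use adj in auto)
    thus ?thesis using True unfolding lt_def A_def[symmetric] B_def[symmetric]
      by (auto simp: lstart_def lend_def asrc_def atgt_def tm_def msrc_def mtgt_def)
  next
    case False
    hence e: "fst A + snd A = fst B + snd B" using sh by auto
    have t: "tc B A" using e sAB adj wA unfolding tc_def sub_def wing_def by auto
    have "irreducible n S (tm B A)" by (rule irr_tm[OF BC AC AB[symmetric] t]) (use adj in auto)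
    thus ?thesis using False e unfolding lt_def A_def[symmetric] B_def[symmetric]
      by (auto simp: lstart_def lend_def asrc_def atgt_def tm_def msrc_def mtgt_def)
  qed
qed

definition w0 :: qstring where "w0 = (cs!0, map lt [0..<length cs - 1])"

lemma cs_ne: "C \<noteq> {} \<Longrightarrow> cs \<noteq> []"
  using cs_props(2) by auto

lemma verts_w0: assumes "C \<noteq> {}" shows "verts w0 = cs"
proof -
  have ne: "cs \<noteq> []" using cs_ne assms .
  show ?thesis
  proof (rule nth_equalityI)
    show "length (verts w0) = length cs" using ne unfolding verts_def w0_def by (cases cs) auto
    fix k assume k: "k < length (verts w0)"
    show "verts w0 ! k = cs ! k"
    proof (cases k)
      case 0 thus ?thesis unfolding verts_def w0_def by simp
    next
      case (Suc k')
      have k': "Suc k' < length cs" using k Suc ne unfolding verts_def w0_def by (cases cs) auto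
      thus ?thesis using Suc lt_props[OF k'] unfolding verts_def w0_def by auto
    qed
  qed
qed

lemma w0_string:
  assumes Cne: "C \<noteq> {}"
  shows "is_string n S w0"
proof -
  define N where "N = length cs"
  define ls where "ls = map lt [0..<N - 1]"
  have ne: "cs \<noteq> []" using cs_ne Cne .
  have w0e: "w0 = (cs!0, ls)" unfolding w0_def ls_def N_def ..
  have lsl: "length ls = N - 1" unfolding ls_def by simp
  have lsn: "ls ! r = lt r" if "r < N - 1" for r using that unfolding ls_def by simp
  have c1: "cs!0 \<in> S" using cs_nth[of 0] ne CS by auto
  have c2: "\<forall>l\<in>set ls. irreducible n S (snd l)"
    unfolding ls_def N_def using lt_props by auto
  have c3: "ls \<noteq> [] \<longrightarrow> lstart (hd ls) = cs!0"
    using lt_props[of 0] unfolding ls_def N_def by (auto simp: upt_conv_Cons)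
  have c4: "\<forall>i. Suc i < length ls \<longrightarrow> lend (ls ! i) = lstart (ls ! Suc i) \<and>
          ls ! Suc i \<noteq> (\<not> fst (ls ! i), snd (ls ! i))"
  proof (intro allI impI)
    fix i assume i: "Suc i < length ls"
    have i1: "Suc i < N" "Suc (Suc i) < N" using i lsl by auto
    have a: "lend (ls ! i) = cs ! Suc i" "lstart (ls ! Suc i) = cs ! Suc i" "lend (ls ! Suc i) = cs ! Suc (Suc i)"
      using lt_props[of i] lt_props[of "Suc i"] lsn[of i] lsn[of "Suc i"] i1 lsl N_def by auto
    have b: "lstart (ls ! i) = cs ! i" using lt_props[of i] lsn[of i] i1 N_def by auto
    have dd: "cs ! i \<noteq> cs ! Suc (Suc i)" using cs_props(3) i1 N_def by (simp add: nth_eq_iff_index_eq)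
    have "ls ! Suc i \<noteq> (\<not> fst (ls ! i), snd (ls ! i))"
    proof
      assume eq: "ls ! Suc i = (\<not> fst (ls ! i), snd (ls ! i))"
      have "lend (\<not> fst (ls ! i), snd (ls ! i)) = lstart (ls ! i)"
        unfolding lend_def lstart_def by auto
      thus False using eq a(3) b dd by auto
    qed
    thus "lend (ls ! i) = lstart (ls ! Suc i) \<and> ls ! Suc i \<noteq> (\<not> fst (ls ! i), snd (ls ! i))"
      using a by auto
  qed
  have c5: "\<forall>i j. i \<le> j \<and> j < length ls \<longrightarrow>
        (let seg = drop i (take (Suc j) ls) in
          ((\<forall>l\<in>set seg. fst l) \<longrightarrow> \<not> zero_relation n S (map snd seg)) \<and>
          ((\<forall>l\<in>set seg. \<not> fst l) \<longrightarrow> \<not> zero_relation n S (rev (map snd seg))))"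
  proof (intro allI impI)
    fix i j assume ij: "i \<le> j \<and> j < length ls"
    have seg: "drop i (take (Suc j) ls) = map lt [i..<Suc j]"
      unfolding ls_def using ij lsl by (simp add: take_map drop_map take_upt drop_upt)
    have rng: "\<And>r. i \<le> r \<Longrightarrow> r \<le> j \<Longrightarrow> Suc r < length cs" using ij lsl N_def by auto
    have sn: "\<And>r. r < length cs \<Longrightarrow> 1 \<le> snd (cs ! r)" using cs_nth wC unfolding wing_def by blast
    have T: "\<not> zero_relation n S (map snd (map lt [i..<Suc j]))" if all: "\<forall>l\<in>set (map lt [i..<Suc j]). fst l"
    proof -
      have f: "\<And>r. i \<le> r \<Longrightarrow> r \<le> j \<Longrightarrow> fst (lt r)" using all by auto
      have m: "map snd (map lt [i..<Suc j]) = map (\<lambda>r. tm (cs ! Suc r) (cs ! r)) [i..<Suc j]"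
        using lt_props rng f by auto
      have h: "\<forall>r. i \<le> r \<and> r \<le> j \<longrightarrow> fst (cs ! r) + snd (cs ! r) = fst (cs ! Suc r) + snd (cs ! Suc r) \<and> 1 \<le> snd (cs ! r)"
        using lt_props rng f sn by (meson Suc_lessD)
      have "peval n (map (\<lambda>r. tm (cs ! Suc r) (cs ! r)) [i..<Suc j]) \<noteq> None"
        using PE1[of i j "\<lambda>r. cs ! r", OF _ h] ij by auto
      thus ?thesis unfolding zero_relation_def m by auto
    qed
    have F: "\<not> zero_relation n S (rev (map snd (map lt [i..<Suc j])))" if all: "\<forall>l\<in>set (map lt [i..<Suc j]). \<not> fst l"
    proof -
      have f: "\<And>r. i \<le> r \<Longrightarrow> r \<le> j \<Longrightarrow> \<not> fst (lt r)" using all by auto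
      have m: "map snd (map lt [i..<Suc j]) = map (\<lambda>r. tm (cs ! r) (cs ! Suc r)) [i..<Suc j]"
        using lt_props rng f by auto
      have h: "\<forall>r. i \<le> r \<and> r \<le> j \<longrightarrow> fst (cs ! r) = fst (cs ! Suc r) \<and> 1 \<le> snd (cs ! r)"
        using lt_props rng f sn by (meson Suc_lessD)
      have "peval n (rev (map (\<lambda>r. tm (cs ! r) (cs ! Suc r)) [i..<Suc j])) \<noteq> None"
        using PE2[of i j "\<lambda>r. cs ! r", OF _ h] ij by auto
      thus ?thesis unfolding zero_relation_def m by auto
    qed
    show "let seg = drop i (take (Suc j) ls) in
          ((\<forall>l\<in>set seg. fst l) \<longrightarrow> \<not> zero_relation n S (map snd seg)) \<and>
          ((\<forall>l\<in>set seg. \<not> fst l) \<longrightarrow> \<not> zero_relation n S (rev (map snd seg)))"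
      unfolding seg Let_def using T F by blast
  qed
  note c5' = c5[unfolded Let_def]
  show ?thesis unfolding is_string_def Let_def w0e fst_conv snd_conv
    by (rule conjI[OF c1 conjI[OF c2 conjI[OF c3 conjI[OF c4 c5']]]])
qed

lemma part3:
  assumes Cne: "C \<noteq> {}"
  shows "\<exists>v\<in>C. (\<forall>u\<in>C. u \<noteq> v \<longrightarrow> snd u < snd v) \<and>
           (\<exists>!w. is_string n S w \<and> traverses_exactly w C \<and> endv w = v)"
proof -
  have ne: "cs \<noteq> []" using cs_ne Cne .
  define v where "v = last cs"
  have vC: "v \<in> C" unfolding v_def using last_in_set[OF ne] cs_props(2) by simp
  have lens: "length ys0 = length cs" using cs_props(1) by (metis length_map)
  have vl: "v = cs ! (length cs - 1)" unfolding v_def using ne by (rule last_conv_nth)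
  have vmax: "snd u \<le> snd v" if u: "u \<in> C" for u
  proof -
    have "u \<in> set cs" using u cs_props(2) by simp
    then obtain k where k: "k < length cs" "u = cs ! k" by (auto simp: in_set_conv_nth)
    have l1: "length cs - 1 < length cs" using ne by simp
    have "ys0 ! k \<le> ys0 ! (length cs - 1)"
      using sorted_nth_mono[OF ys0_props(1), of k "length cs - 1"] k(1) lens by simp
    thus ?thesis using k cs_snd[OF k(1)] cs_snd[OF l1] vl by simp
  qed
  have vstrict: "\<forall>u\<in>C. u \<noteq> v \<longrightarrow> snd u < snd v"
  proof (intro ballI impI)
    fix u assume u: "u \<in> C" "u \<noteq> v"
    have "snd u \<noteq> snd v" using eq_of_snd[OF u(1) vC] u(2) by blast
    thus "snd u < snd v" using vmax[OF u(1)] by simp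
  qed
  have tw0: "traverses_exactly w0 C" unfolding traverses_exactly_def verts_w0[OF Cne]
    using cs_props by auto
  have ew0: "endv w0 = v" unfolding endv_def verts_w0[OF Cne] v_def ..
  have uniq: "w = w0" if "is_string n S w" "traverses_exactly w C" "endv w = v" for w
  proof -
    have "verts w = cs" using valid_verts[OF that(1,2)] that(3) vmax by auto
    thus ?thesis using letter_det[OF that(1,2) w0_string[OF Cne] tw0] verts_w0[OF Cne] by simp
  qed
  have "\<exists>!w. is_string n S w \<and> traverses_exactly w C \<and> endv w = v"
    using w0_string[OF Cne] tw0 ew0 uniq by (intro ex1I[of _ w0]) blast+
  thus ?thesis using vC vstrict by blast
qed

end

lemma didx_F:
  assumes n: "2 \<le> n" and Y: "wing n Y" and X: "1 \<le> fst X" "fst X \<le> n" "1 \<le> snd X"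
  shows "didx n Y X \<noteq> {} \<longleftrightarrow>
    fst Y \<le> cnorm n (fst X + snd X + 1) \<and> cnorm n (fst X + snd X + 1) \<le> fst Y + snd Y - 1 \<and>
    cnorm n (fst X + snd X + 1) - fst Y \<le> snd X - 1"
proof -
  define a where "a = fst Y"
  define b where "b = snd Y"
  define x where "x = fst X"
  define bx where "bx = snd X"
  define z where "z = cnorm n (x + bx + 1)"
  define c where "c = fst (tau n Y) - fst (tauinv n X)"
  define D1 where "D1 = cnorm n (a - 1) - (a - 1)"
  define D2 where "D2 = cnorm n (x + 1) - (x + 1)"
  define D3 where "D3 = z - (x + bx + 1)"
  have n0: "0 < n" using n by auto
  have d1: "n dvd D1" "n dvd D2" "n dvd D3" unfolding D1_def D2_def D3_def z_def using cnorm_dvd[OF n0] by auto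
  have ce: "c = a - 1 + D1 - (x + 1 + D2)" unfolding c_def D1_def D2_def a_def x_def tau_def tauinv_def by simp
  have D: "didx n Y X = {t. 0 \<le> t \<and> t < bx \<and> n dvd (t - c) \<and> bx - t \<le> b}"
    unfolding didx_def tidx_def modeq c_def bx_def b_def by (simp add: tau_def tauinv_def)
  have wY: "1 \<le> a" "1 \<le> b" "a + b \<le> n" using Y unfolding wing_def a_def b_def by auto
  have "(\<exists>t. 0 \<le> t \<and> t < bx \<and> n dvd (t - c) \<and> bx - t \<le> b) \<longleftrightarrow> a \<le> z \<and> z \<le> a + b - 1 \<and> z - a \<le> bx - 1"
  proof
    assume "\<exists>t. 0 \<le> t \<and> t < bx \<and> n dvd (t - c) \<and> bx - t \<le> b"
    then obtain t where t: "0 \<le> t" "t < bx" "n dvd (t - c)" "bx - t \<le> b" by blast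
    define P where "P = a + bx - 1 - t"
    have e1: "x + bx + 1 - P = (t - c) + D1 - D2" unfolding P_def ce by simp
    have "n dvd (t - c) + D1 - D2" by (rule dvd_diff[OF dvd_add[OF t(3) d1(1)] d1(2)])
    hence dP: "n dvd (x + bx + 1 - P)" using e1 by simp
    have "z = P" unfolding z_def by (rule cnorm_eq[OF n0]) (use wY t P_def dP in auto)
    thus "a \<le> z \<and> z \<le> a + b - 1 \<and> z - a \<le> bx - 1" using t P_def by auto
  next
    assume h: "a \<le> z \<and> z \<le> a + b - 1 \<and> z - a \<le> bx - 1"
    define t where "t = bx - 1 - (z - a)"
    have e1: "t - c = D2 - D1 - D3" unfolding t_def ce D3_def by simp
    have "n dvd D2 - D1 - D3" by (rule dvd_diff[OF dvd_diff[OF d1(2) d1(1)] d1(3)])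
    hence "n dvd (t - c)" using e1 by simp
    moreover have "0 \<le> t \<and> t < bx \<and> bx - t \<le> b" using h t_def by auto
    ultimately show "\<exists>t. 0 \<le> t \<and> t < bx \<and> n dvd (t - c) \<and> bx - t \<le> b" by blast
  qed
  thus ?thesis unfolding D a_def[symmetric] b_def[symmetric] x_def[symmetric] bx_def[symmetric] z_def[symmetric]
    by auto
qed


lemma Rk_chain:
  assumes n: "2 \<le> n" and mr: "maxrigid n S" and T1: "(1, n - 1) \<in> S" and X: "X \<in> ind n"
  shows "\<exists>p. chainctx n S (Rk n k X \<inter> S) p"
proof -
  have SI: "S \<subseteq> ind n" using mr unfolding maxrigid_def rigid_def by auto
  have wS: "\<And>Y. Y \<in> S \<Longrightarrow> wing n Y" using S_wing n mr T1 by blast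
  have Xr: "1 \<le> fst X" "fst X \<le> n" "1 \<le> snd X" using X unfolding ind_def by auto
  show ?thesis
  proof (cases k)
    case KT
    have mem: "Y \<in> Rk n k X \<longleftrightarrow> (fst Y \<le> fst X \<and> fst X < fst Y + snd Y \<and> fst Y + snd Y - fst X \<le> snd X)" if Y: "Y \<in> S" for Y
      using tidx_wing_ne[OF n, of Y X] wS[OF Y] Xr SI Y KT unfolding Rk_def idx_def wing_def
      by auto
    have "chainctx n S (Rk n k X \<inter> S) (fst X)"
    proof (unfold_locales)
      show "2 \<le> n" "maxrigid n S" "(1, n - 1) \<in> S" "Rk n k X \<inter> S \<subseteq> S" using n mr T1 by auto
      fix Y assume Y: "Y \<in> Rk n k X \<inter> S"
      thus "cont Y (fst X)" using mem[of Y] unfolding cont_def by auto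
    next
      fix Y U assume Y: "Y \<in> Rk n k X \<inter> S" and U: "U \<in> S" "cont U (fst X)" "sub U Y"
      have "(fst Y \<le> fst X \<and> fst X < fst Y + snd Y \<and> fst Y + snd Y - fst X \<le> snd X)" using Y mem[of Y] by auto
      hence "(fst U \<le> fst X \<and> fst X < fst U + snd U \<and> fst U + snd U - fst X \<le> snd X)" using U unfolding cont_def sub_def by auto
      thus "U \<in> Rk n k X \<inter> S" using mem[of U] U by auto
    qed
    thus ?thesis by blast
  next
    case KD
    define z where "z = cnorm n (fst X + snd X + 1)"
    have mem: "Y \<in> Rk n k X \<longleftrightarrow> fst Y \<le> z \<and> z \<le> fst Y + snd Y - 1 \<and> z - fst Y \<le> snd X - 1"
      if Y: "Y \<in> S" for Y
      using didx_F[OF n wS[OF Y] Xr] SI Y KD unfolding Rk_def idx_def z_def by auto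
    have "chainctx n S (Rk n k X \<inter> S) z"
    proof (unfold_locales)
      show "2 \<le> n" "maxrigid n S" "(1, n - 1) \<in> S" "Rk n k X \<inter> S \<subseteq> S" using n mr T1 by auto
      fix Y assume Y: "Y \<in> Rk n k X \<inter> S"
      thus "cont Y z" using mem[of Y] unfolding cont_def by auto
    next
      fix Y U assume Y: "Y \<in> Rk n k X \<inter> S" and U: "U \<in> S" "cont U z" "sub U Y"
      have "fst Y \<le> z \<and> z \<le> fst Y + snd Y - 1 \<and> z - fst Y \<le> snd X - 1" using Y mem[of Y] by auto
      hence "fst U \<le> z \<and> z \<le> fst U + snd U - 1 \<and> z - fst U \<le> snd X - 1"
        using U unfolding cont_def sub_def by auto
      thus "U \<in> Rk n k X \<inter> S" using mem[of U] U by auto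
    qed
    thus ?thesis by blast
  qed
qed

lemma homC_sym:
  assumes n: "0 < n" and X: "1 \<le> fst X" "fst X \<le> n" and Y: "1 \<le> fst Y" "fst Y \<le> n"
  shows "homC n (tauinv n X) (tau n Y) \<longleftrightarrow> homC n Y X"
proof -
  have "didx n (tauinv n X) (tau n Y) = tidx n Y X"
    unfolding didx_def using tauinv_tau[OF n Y] tau_tauinv[OF n X] by simp
  moreover have "tidx n (tauinv n X) (tau n Y) = didx n Y X" unfolding didx_def ..
  ultimately show ?thesis unfolding homC_def by auto
qed

lemma part1:
  assumes n: "2 \<le> n" and mr: "maxrigid n S" and T1: "(1, n - 1) \<in> S" and XF: "X \<in> Fregion n"
  shows "Rall n X \<inter> S = {} \<longleftrightarrow> X \<in> tau n ` S"
proof -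
  have n0: "0 < n" using n by auto
  have X: "X \<in> ind n" using XF unfolding Fregion_def by auto
  have Xr: "1 \<le> fst X" "fst X \<le> n" "1 \<le> snd X" using X unfolding ind_def by auto
  have SI: "S \<subseteq> ind n" using mr unfolding maxrigid_def rigid_def by auto
  have rig: "\<And>A B. A \<in> S \<Longrightarrow> B \<in> S \<Longrightarrow> \<not> ext1 n A B" using mr unfolding maxrigid_def rigid_def by auto
  have RallI: "Y \<in> Rall n X \<longleftrightarrow> Y \<in> ind n \<and> homC n Y X" for Y
    unfolding Rall_def Rk_def idx_def homC_def by auto
  show ?thesis
  proof
    assume E: "Rall n X \<inter> S = {}"
    have bx: "snd X \<le> n - 1"
    proof (rule ccontr)
      assume c: "\<not> snd X \<le> n - 1"
      have "fst X + snd X \<le> 2 * n - 1" using XF c unfolding Fregion_def by auto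
      hence "tidx n (1, n - 1) X \<noteq> {}" using tidx_wing_ne[OF n, of "(1, n - 1)" X] Xr c n by auto
      hence "(1, n - 1) \<in> Rall n X" using T1 SI unfolding RallI homC_def by auto
      thus False using E T1 by auto
    qed
    define Y0 where "Y0 = tauinv n X"
    have Y0r: "1 \<le> fst Y0" "fst Y0 \<le> n" using cnorm_range[OF n0] unfolding Y0_def tauinv_def by auto
    have Y0ind: "Y0 \<in> ind n" using Y0r Xr unfolding ind_def Y0_def tauinv_def by auto
    have tY0: "tau n Y0 = X" unfolding Y0_def using tau_tauinv[OF n0 Xr(1,2)] .
    have noself: "tidx n Y0 X = {}"
    proof (rule ccontr)
      assume "tidx n Y0 X \<noteq> {}"
      then obtain t where t: "0 \<le> t" "t < snd X" "n dvd (t - (fst X - cnorm n (fst X + 1)))"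
        unfolding tidx_def Y0_def tauinv_def modeq by auto
      have d: "n dvd (cnorm n (fst X + 1) - (fst X + 1))" using cnorm_dvd[OF n0] .
      have "n dvd (t - (fst X - cnorm n (fst X + 1))) - (cnorm n (fst X + 1) - (fst X + 1))"
        by (rule dvd_diff[OF t(3) d])
      hence "n dvd t + 1" by (smt (verit))
      hence "t + 1 = 0" by (rule dvd_small[OF n0]) (use t bx in auto)
      thus False using t by auto
    qed
    have noself2: "\<not> homC n Y0 X"
      unfolding homC_def didx_def using noself tY0 by (simp add: Y0_def)
    have "rigid n (insert Y0 S)"
    proof -
      have "\<not> ext1 n A B" if A: "A \<in> insert Y0 S" and B: "B \<in> insert Y0 S" for A B
      proof -
        have hx: "\<not> homC n Y X" if "Y \<in> S" for Y using E RallI[of Y] that SI by blast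
        have ind_r: "1 \<le> fst Y \<and> fst Y \<le> n" if "Y \<in> S" for Y using that SI unfolding ind_def by auto
        show ?thesis
        proof (cases "A = Y0"; cases "B = Y0")
          assume "A = Y0" "B = Y0" thus ?thesis unfolding ext1_def using noself2 tY0 by simp
        next
          assume a: "A = Y0" "B \<noteq> Y0"
          hence BS: "B \<in> S" using B by auto
          show ?thesis unfolding ext1_def a(1) Y0_def
            using homC_sym[OF n0 Xr(1,2), of B] ind_r[OF BS] hx[OF BS] by auto
        next
          assume a: "A \<noteq> Y0" "B = Y0"
          hence AS: "A \<in> S" using A by auto
          show ?thesis unfolding ext1_def a(2) tY0 using hx[OF AS] .
        next
          assume a: "A \<noteq> Y0" "B \<noteq> Y0"
          thus ?thesis using A B rig by auto
        qed
      qed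
      thus ?thesis unfolding rigid_def using SI Y0ind by auto
    qed
    hence "Y0 \<in> S" using mr Y0ind unfolding maxrigid_def by auto
    thus "X \<in> tau n ` S" using tY0 by force
  next
    assume "X \<in> tau n ` S"
    then obtain Y0 where Y0: "Y0 \<in> S" "X = tau n Y0" by auto
    show "Rall n X \<inter> S = {}"
    proof (rule ccontr)
      assume "Rall n X \<inter> S \<noteq> {}"
      then obtain Y where Y: "Y \<in> S" "homC n Y X" using RallI by auto
      hence "ext1 n Y Y0" unfolding ext1_def Y0(2) by simp
      thus False using rig Y(1) Y0(1) by auto
    qed
  qed
qed


theorem lemma4p4:
  fixes n :: int and S :: "ind set" and X :: ind
  assumes "n \<ge> 2" and "maxrigid n S" and "(1, n - 1) \<in> S" and "X \<in> Fregion n"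
  shows "(Rall n X \<inter> S = {} \<longleftrightarrow> X \<in> tau n ` S) \<and>
    (\<forall>k. (\<forall>Ti Yo Zo. Tsubwing n S Ti Yo Zo \<longrightarrow>
            \<not> (\<exists>Tj Tk. Yo = Some Tj \<and> Zo = Some Tk \<and> Tj \<in> Rk n k X \<and> Tk \<in> Rk n k X)) \<and>
         (Rk n k X \<inter> S \<noteq> {} \<longrightarrow>
            (\<exists>v\<in>Rk n k X \<inter> S. (\<forall>u\<in>Rk n k X \<inter> S. u \<noteq> v \<longrightarrow> snd u < snd v) \<and>
               (\<exists>!w. is_string n S w \<and> traverses_exactly w (Rk n k X \<inter> S) \<and> endv w = v))) \<and>
         (\<forall>w. is_string n S w \<and> traverses_exactly w (Rk n k X \<inter> S) \<and>
               (\<forall>u\<in>Rk n k X \<inter> S. snd u \<le> snd (endv w)) \<longrightarrow>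
               (\<forall>l\<in>set (snd w). mkind (snd l) = KT)))"
proof -
  note n = assms(1) and mr = assms(2) and T1 = assms(3) and XF = assms(4)
  have X: "X \<in> ind n" using XF unfolding Fregion_def by auto
  have n0: "0 < n" using n by auto
  have p1: "Rall n X \<inter> S = {} \<longleftrightarrow> X \<in> tau n ` S" by (rule part1[OF n mr T1 XF])
  have rest: "(\<forall>Ti Yo Zo. Tsubwing n S Ti Yo Zo \<longrightarrow>
            \<not> (\<exists>Tj Tk. Yo = Some Tj \<and> Zo = Some Tk \<and> Tj \<in> Rk n k X \<and> Tk \<in> Rk n k X)) \<and>
         (Rk n k X \<inter> S \<noteq> {} \<longrightarrow>
            (\<exists>v\<in>Rk n k X \<inter> S. (\<forall>u\<in>Rk n k X \<inter> S. u \<noteq> v \<longrightarrow> snd u < snd v) \<and>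
               (\<exists>!w. is_string n S w \<and> traverses_exactly w (Rk n k X \<inter> S) \<and> endv w = v))) \<and>
         (\<forall>w. is_string n S w \<and> traverses_exactly w (Rk n k X \<inter> S) \<and>
               (\<forall>u\<in>Rk n k X \<inter> S. snd u \<le> snd (endv w)) \<longrightarrow>
               (\<forall>l\<in>set (snd w). mkind (snd l) = KT))" for k
  proof -
    obtain p where cc: "chainctx n S (Rk n k X \<inter> S) p" using Rk_chain[OF n mr T1 X] by blast
    have ii: "\<not> (\<exists>Tj Tk. Yo = Some Tj \<and> Zo = Some Tk \<and> Tj \<in> Rk n k X \<and> Tk \<in> Rk n k X)"
      if ts: "Tsubwing n S Ti Yo Zo" for Ti Yo Zo
    proof
      assume "\<exists>Tj Tk. Yo = Some Tj \<and> Zo = Some Tk \<and> Tj \<in> Rk n k X \<and> Tk \<in> Rk n k X"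
      then obtain Tj Tk where t: "Yo = Some Tj" "Zo = Some Tk" "Tj \<in> Rk n k X" "Tk \<in> Rk n k X" by blast
      have TiS: "Ti \<in> S" and TjS: "Tj \<in> S" and TkS: "Tk \<in> S" using ts t unfolding Tsubwing_def by auto
      have sw: "subwing_triple n Ti Yo Zo" using ts unfolding Tsubwing_def by auto
      then obtain a b c where abc: "Ti = (a, b)" "1 \<le> c" "c \<le> b - 2"
        "Tj = (a, c)" "Tk = (cnorm n (a + c + 1), b - c - 1)"
        using t unfolding subwing_triple_def by auto
      have wi: "wing n Ti" using S_wing[OF n mr T1 TiS] .
      have ce: "cnorm n (a + c + 1) = a + c + 1"
        using wi abc n0 unfolding wing_def by (intro cnorm_eq) auto
      have "cont Tj p" "cont Tk p" using chainctx.CP[OF cc] t TjS TkS by auto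
      thus False using abc ce unfolding cont_def by auto
    qed
    have iii: "Rk n k X \<inter> S \<noteq> {} \<longrightarrow>
            (\<exists>v\<in>Rk n k X \<inter> S. (\<forall>u\<in>Rk n k X \<inter> S. u \<noteq> v \<longrightarrow> snd u < snd v) \<and>
               (\<exists>!w. is_string n S w \<and> traverses_exactly w (Rk n k X \<inter> S) \<and> endv w = v))"
      using chainctx.part3[OF cc] by blast
    have iv: "\<forall>w. is_string n S w \<and> traverses_exactly w (Rk n k X \<inter> S) \<and>
               (\<forall>u\<in>Rk n k X \<inter> S. snd u \<le> snd (endv w)) \<longrightarrow>
               (\<forall>l\<in>set (snd w). mkind (snd l) = KT)"
      using chainctx.part4[OF cc] by blast
    show ?thesis using ii iii iv by blast
  qed
  show ?thesis using p1 rest by blast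
qed

end
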